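(* Let $(\varphi_k)_{k\ge0}$ be a sequence of nonnegative weights with $\varphi_0>0$ and $\varphi(t)=\sum_k\varphi_kt^k$. For every $n\ge1$ there is a bijection between the set of (ordered) increasing diamonds of size $n$ on the label set $\{1,\dots,n\}$ with degree-weights $(\varphi_k)$ and the set of ordered increasing bucket trees of size $n$ with maximal bucket size $b=2$, degree-weights $(\varphi_k)$ and $\psi_1=1$; this bijection preserves weights. In particular both families have the same total weight for each size $n$.
   Context: Increasing diamonds are defined recursively on a finite set $L$ of integer labels. If $|L|=1$, the unique increasing diamond on $L$ is a single vertex carrying that label; its weight is $1$. If $|L|\ge2$, an increasing diamond on $L$ consists of a source vertex labelled $\min L$, a sink vertex labelled $\max L$, and an ordered sequence $(F_1,\dots,F_r)$, $r\ge0$, of increasing diamonds whose label sets partition $L\setminus\{\min L,\max L\}$ (as a directed graph: the source points to the minimal vertex of each $F_i$ and the maximal vertex of each $F_i$ points to the sink); its weight is $\varphi_r\prod_{i=1}^r w(F_i)$. The size is $|L|$. (Symbolically $\mathcal F=\mathcal Z^{\Box}+\mathcal Z^{\Box}\ast\varphi(\mathcal F)\ast\mathcal Z^{\blacksquare}$.) Ordered increasing bucket trees with $b=2$: rooted plane trees (children ordered) whose nodes have capacity $1$ or $2$, every node with a child having capacity $2$; a tree of size $n$ (sum of capacities) carries labels $1,\dots,n$, each node holding as many labels as its capacity, with every label in a node smaller than all labels in its children. Weight: product over nodes of $\varphi_{d^+(v)}$ for capacity-2 nodes ($d^+(v)$ = number of children) and $\psi_1=1$ for capacity-1 nodes. 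*)

theory Defs
  imports Complex_Main
begin

definition pw_disj :: "nat set list \<Rightarrow> bool" where
  "pw_disj Ls \<longleftrightarrow> (\<forall>i<length Ls. \<forall>j<length Ls. i \<noteq> j \<longrightarrow> Ls ! i \<inter> Ls ! j = {})"

text \<open>Increasing diamonds: a single vertex, or source label, ordered list of
  sub-diamonds, sink label.\<close>
datatype diamond = DLeaf nat | DNode nat "diamond list" nat

inductive diamond_on :: "nat set \<Rightarrow> diamond \<Rightarrow> bool" where
  leaf: "diamond_on {l} (DLeaf l)"
| node: "\<lbrakk> finite L; card L \<ge> 2; list_all2 diamond_on Ls Fs; pw_disj Ls;
           \<Union>(set Ls) = L - {Min L, Max L} \<rbrakk>
         \<Longrightarrow> diamond_on L (DNode (Min L) Fs (Max L))"

fun dweight :: "(nat \<Rightarrow> real) \<Rightarrow> diamond \<Rightarrow> real" where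
  "dweight phi (DLeaf l) = 1"
| "dweight phi (DNode a Fs b) = phi (length Fs) * prod_list (map (dweight phi) Fs)"

text \<open>Ordered increasing bucket trees with maximal bucket size 2: each node holds a
  set of labels (its bucket, of capacity 1 or 2) and an ordered list of children.\<close>
datatype btree = BNode "nat set" "btree list"

inductive bt_on :: "nat set \<Rightarrow> btree \<Rightarrow> bool" where
  node: "\<lbrakk> card S = 1 \<or> card S = 2; card S = 1 \<longrightarrow> Ts = [];
           list_all2 bt_on Ls Ts; pw_disj Ls; S \<inter> \<Union>(set Ls) = {};
           \<forall>x\<in>S. \<forall>y\<in>\<Union>(set Ls). x < y; L = S \<union> \<Union>(set Ls) \<rbrakk>
         \<Longrightarrow> bt_on L (BNode S Ts)"

text \<open>Weight: \<open>phi (outdegree)\<close> for capacity-2 nodes, \<open>psi_1 = 1\<close> for capacity-1 nodes.\<close>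
fun btweight :: "(nat \<Rightarrow> real) \<Rightarrow> btree \<Rightarrow> real" where
  "btweight phi (BNode S Ts) =
     (if card S = 2 then phi (length Ts) else 1) * prod_list (map (btweight phi) Ts)"

end

theory Submission
  imports Defs
begin

fun dmap :: "(nat \<Rightarrow> nat) \<Rightarrow> diamond \<Rightarrow> diamond" where
  "dmap f (DLeaf l) = DLeaf (f l)"
| "dmap f (DNode a Fs b) = DNode (f a) (map (dmap f) Fs) (f b)"

fun dlabels :: "diamond \<Rightarrow> nat set" where
  "dlabels (DLeaf l) = {l}"
| "dlabels (DNode a Fs b) = {a, b} \<union> \<Union>(set (map dlabels Fs))"

fun tlabels :: "btree \<Rightarrow> nat set" where
  "tlabels (BNode S Ts) = S \<union> \<Union>(set (map tlabels Ts))"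

definition nsucc :: "nat set \<Rightarrow> nat \<Rightarrow> nat" where
  "nsucc L x = Min {y\<in>L. x < y}"
definition npred :: "nat set \<Rightarrow> nat \<Rightarrow> nat" where
  "npred L x = Max {y\<in>L. y < x}"

lemma size_dmap[simp]: "size (dmap f d) = size d"
  by (induction d) (auto simp: size_list_conv_sum_list comp_def intro!: arg_cong[where f=sum_list])

function d2t :: "diamond \<Rightarrow> btree" where
  "d2t (DLeaf l) = BNode {l} []"
| "d2t (DNode a Fs b) = BNode {a, nsucc (dlabels (DNode a Fs b)) a}
     (map (\<lambda>F. d2t (dmap (nsucc (dlabels (DNode a Fs b))) F)) Fs)"
  by pat_completeness auto
termination
  apply (relation "measure size")
  apply (auto simp: less_Suc_eq_le intro: size_list_estimation')
  done

fun t2d :: "btree \<Rightarrow> diamond" where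
  "t2d (BNode S Ts) = (if card S = 1 then DLeaf (Min S) else
     DNode (Min S) (map (\<lambda>T. dmap (npred (tlabels (BNode S Ts))) (t2d T)) Ts) (Max (tlabels (BNode S Ts))))"


lemma dmap_dmap: "dmap f (dmap g d) = dmap (f \<circ> g) d"
  by (induction d) auto

lemma dmap_cong: "(\<forall>x\<in>dlabels d. f x = g x) \<Longrightarrow> dmap f d = dmap g d"
  by (induction d) auto

lemma dmap_id: "(\<forall>x\<in>dlabels d. f x = x) \<Longrightarrow> dmap f d = d"
  by (induction d) (auto intro: map_idI)

lemma dweight_dmap[simp]: "dweight ph (dmap f d) = dweight ph d"
  by (induction d) (simp_all add: comp_def cong: map_cong)

lemma diamond_on_labels: "diamond_on L d \<Longrightarrow> dlabels d = L"
proof (induct rule: diamond_on.induct)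
  case (node L Ls Fs)
  have "\<Union>(set (map dlabels Fs)) = \<Union>(set Ls)"
    using node(3) by (induction rule: list_all2_induct) auto
  moreover have "Min L \<in> L" "Max L \<in> L" using node(1,2) by (auto intro!: Min_in Max_in)
  ultimately show ?case using node(5) by auto
qed auto

lemma diamond_on_fin: "diamond_on L d \<Longrightarrow> finite L \<and> L \<noteq> {}"
  by (induction rule: diamond_on.induct) auto

lemma bt_on_labels: "bt_on L t \<Longrightarrow> tlabels t = L"
proof (induct rule: bt_on.induct)
  case (node S Ts Ls L)
  have "\<Union>(set (map tlabels Ts)) = \<Union>(set Ls)"
    using node(3) by (induction rule: list_all2_induct) auto
  then show ?case using node by auto
qed

lemma bt_on_fin: "bt_on L t \<Longrightarrow> finite L"
proof (induct rule: bt_on.induct)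
  case (node S Ts Ls L)
  have "finite S" using node(1) by (metis card.infinite zero_neq_one zero_neq_numeral)
  moreover have "\<forall>X\<in>set Ls. finite X"
    using node(3) by (induction rule: list_all2_induct) auto
  ultimately show ?case using node by auto
qed

lemma nsucc: assumes "finite L" "x \<in> L" "x < Max L"
  shows "nsucc L x \<in> L" "x < nsucc L x" "\<And>y. y \<in> L \<Longrightarrow> x < y \<Longrightarrow> nsucc L x \<le> y"
proof -
  have ne: "{y\<in>L. x < y} \<noteq> {}" using assms by (metis (mono_tags, lifting) Max_in empty_iff mem_Collect_eq)
  have f: "finite {y\<in>L. x < y}" using assms by auto
  show "nsucc L x \<in> L" "x < nsucc L x" using Min_in[OF f ne] unfolding nsucc_def by auto
  show "\<And>y. y \<in> L \<Longrightarrow> x < y \<Longrightarrow> nsucc L x \<le> y" unfolding nsucc_def using f by auto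
qed

lemma npred: assumes "finite L" "x \<in> L" "Min L < x"
  shows "npred L x \<in> L" "npred L x < x" "\<And>y. y \<in> L \<Longrightarrow> y < x \<Longrightarrow> y \<le> npred L x"
proof -
  have ne: "{y\<in>L. y < x} \<noteq> {}" using assms by (metis (mono_tags, lifting) Min_in empty_iff mem_Collect_eq)
  have f: "finite {y\<in>L. y < x}" using assms by auto
  show "npred L x \<in> L" "npred L x < x" using Max_in[OF f ne] unfolding npred_def by auto
  show "\<And>y. y \<in> L \<Longrightarrow> y < x \<Longrightarrow> y \<le> npred L x" unfolding npred_def using f by auto
qed

lemma npred_nsucc: assumes "finite L" "x \<in> L" "x < Max L"
  shows "npred L (nsucc L x) = x"
proof -
  note s = nsucc[OF assms]
  have m: "Min L < nsucc L x" using s assms by (meson Min_le le_less_trans)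
  note p = npred[OF assms(1) s(1) m]
  have "x \<le> npred L (nsucc L x)" using p(3)[OF assms(2) s(2)] .
  moreover have "npred L (nsucc L x) \<le> x"
  proof (rule ccontr)
    assume "\<not> ?thesis"
    then have "nsucc L x \<le> npred L (nsucc L x)" using s(3)[OF p(1)] by simp
    then show False using p(2) by simp
  qed
  ultimately show ?thesis by simp
qed

lemma nsucc_npred: assumes "finite L" "x \<in> L" "Min L < x"
  shows "nsucc L (npred L x) = x"
proof -
  note p = npred[OF assms]
  have m: "npred L x < Max L" using p assms by (meson Max_ge less_le_trans)
  note s = nsucc[OF assms(1) p(1) m]
  have "nsucc L (npred L x) \<le> x" using s(3)[OF assms(2) p(2)] .
  moreover have "x \<le> nsucc L (npred L x)"
  proof (rule ccontr)
    assume "\<not> ?thesis"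
    then have "nsucc L (npred L x) \<le> npred L x" using p(3)[OF s(1)] by simp
    then show False using s(2) by simp
  qed
  ultimately show ?thesis by simp
qed

lemma nsucc_mono: assumes "finite L" shows "strict_mono_on (L - {Max L}) (nsucc L)"
proof (rule strict_mono_onI)
  fix x y assume xy: "x \<in> L - {Max L}" "y \<in> L - {Max L}" "x < y"
  have "x < Max L" "y < Max L" using assms xy by (auto simp: order_neq_le_trans)
  then have "nsucc L x \<le> y" "y < nsucc L y" using nsucc[OF assms, of x] nsucc[OF assms, of y] xy by auto
  then show "nsucc L x < nsucc L y" by simp
qed

lemma npred_mono: assumes "finite L" shows "strict_mono_on (L - {Min L}) (npred L)"
proof (rule strict_mono_onI)
  fix x y assume xy: "x \<in> L - {Min L}" "y \<in> L - {Min L}" "x < y"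
  have "Min L < x" "Min L < y" using assms xy by (auto simp: order_neq_le_trans)
  then have "x \<le> npred L y" "npred L x < x" using npred[OF assms, of x] npred[OF assms, of y] xy by auto
  then show "npred L x < npred L y" by simp
qed

lemma nsucc_image: assumes "finite L" shows "nsucc L ` (L - {Max L}) = L - {Min L}"
proof
  show "nsucc L ` (L - {Max L}) \<subseteq> L - {Min L}"
  proof
    fix z assume "z \<in> nsucc L ` (L - {Max L})"
    then obtain x where x: "x \<in> L" "x \<noteq> Max L" "z = nsucc L x" by auto
    then have "x < Max L" using assms by (simp add: order_neq_le_trans)
    then have "z \<in> L" "x < z" using nsucc[OF assms x(1)] x by auto
    moreover have "Min L \<le> x" using assms x by simp
    ultimately show "z \<in> L - {Min L}" by auto
  qed
  show "L - {Min L} \<subseteq> nsucc L ` (L - {Max L})"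
  proof
    fix z assume z: "z \<in> L - {Min L}"
    then have m: "Min L < z" using assms by (simp add: order_neq_le_trans)
    have "npred L z \<in> L" "npred L z < z" "nsucc L (npred L z) = z"
      using npred[OF assms, of z] nsucc_npred[OF assms, of z] z m by auto
    moreover have "z \<le> Max L" using z assms by simp
    ultimately show "z \<in> nsucc L ` (L - {Max L})" by (metis DiffI imageI leD singletonD)
  qed
qed

lemma npred_image: assumes "finite L" shows "npred L ` (L - {Min L}) = L - {Max L}"
proof
  show "npred L ` (L - {Min L}) \<subseteq> L - {Max L}"
  proof
    fix z assume "z \<in> npred L ` (L - {Min L})"
    then obtain x where x: "x \<in> L" "x \<noteq> Min L" "z = npred L x" by auto
    then have "Min L < x" using assms by (simp add: order_neq_le_trans)
    then have "z \<in> L" "z < x" using npred[OF assms x(1)] x by auto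
    moreover have "x \<le> Max L" using assms x by simp
    ultimately show "z \<in> L - {Max L}" by auto
  qed
  show "L - {Max L} \<subseteq> npred L ` (L - {Min L})"
  proof
    fix z assume z: "z \<in> L - {Max L}"
    then have m: "z < Max L" using assms by (simp add: order_neq_le_trans)
    have "nsucc L z \<in> L" "z < nsucc L z" "npred L (nsucc L z) = z"
      using nsucc[OF assms, of z] npred_nsucc[OF assms, of z] z m by auto
    moreover have "Min L \<le> z" using z assms by simp
    ultimately show "z \<in> npred L ` (L - {Min L})" by (metis DiffI imageI leD singletonD)
  qed
qed


lemma smono_sub: "strict_mono_on A f \<Longrightarrow> B \<subseteq> A \<Longrightarrow> strict_mono_on B f"
  by (rule strict_mono_onI) (auto dest: strict_mono_onD)

lemma smono_Min: assumes "finite L" "L \<noteq> {}" "strict_mono_on L f" shows "Min (f ` L) = f (Min L)"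
proof (rule Min_eqI)
  show "finite (f ` L)" using assms by simp
  show "f (Min L) \<in> f ` L" using assms by simp
  fix y assume "y \<in> f ` L"
  then obtain x where "x \<in> L" "y = f x" by auto
  then show "f (Min L) \<le> y" using assms by (simp add: strict_mono_on_leD)
qed

lemma smono_Max: assumes "finite L" "L \<noteq> {}" "strict_mono_on L f" shows "Max (f ` L) = f (Max L)"
proof (rule Max_eqI)
  show "finite (f ` L)" using assms by simp
  show "f (Max L) \<in> f ` L" using assms by simp
  fix y assume "y \<in> f ` L"
  then obtain x where "x \<in> L" "y = f x" by auto
  then show "y \<le> f (Max L)" using assms by (simp add: strict_mono_on_leD)
qed

lemma pw_disj_image: assumes "inj_on f A" "\<forall>X\<in>set Ls. X \<subseteq> A" "pw_disj Ls"
  shows "pw_disj (map ((`) f) Ls)"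
  unfolding pw_disj_def
proof (intro allI impI)
  fix i j assume ij: "i < length (map ((`) f) Ls)" "j < length (map ((`) f) Ls)" "i \<noteq> j"
  then have "Ls ! i \<subseteq> A" "Ls ! j \<subseteq> A" using assms(2) by auto
  then have "f ` (Ls ! i) \<inter> f ` (Ls ! j) = f ` (Ls ! i \<inter> Ls ! j)"
    using assms(1) by (simp add: inj_on_image_Int)
  also have "\<dots> = {}" using assms(3) ij unfolding pw_disj_def by auto
  finally show "map ((`) f) Ls ! i \<inter> map ((`) f) Ls ! j = {}" using ij by simp
qed

lemma diamond_on_dmap: "diamond_on L d \<Longrightarrow> strict_mono_on L \<sigma> \<Longrightarrow> diamond_on (\<sigma> ` L) (dmap \<sigma> d)"
proof (induct arbitrary: \<sigma> rule: diamond_on.induct)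
  case (leaf l)
  then show ?case by (simp add: diamond_on.leaf)
next
  case (node L Ls Fs)
  have ne: "L \<noteq> {}" using node(2) by auto
  have inj: "inj_on \<sigma> L" using node(6) by (rule strict_mono_on_imp_inj_on)
  have len: "length Ls = length Fs" using node(3) by (simp add: list_all2_conv_all_nth)
  have IH: "\<And>i \<tau>. i < length Ls \<Longrightarrow> strict_mono_on (Ls!i) \<tau> \<Longrightarrow> diamond_on (\<tau> ` (Ls!i)) (dmap \<tau> (Fs!i))"
    using node(3) by (auto simp: list_all2_conv_all_nth)
  have sub: "\<forall>X\<in>set Ls. X \<subseteq> L" using node(5) by auto
  have l2: "list_all2 diamond_on (map ((`) \<sigma>) Ls) (map (dmap \<sigma>) Fs)"
  proof -
    have "\<And>i. i<length Ls \<Longrightarrow> diamond_on (\<sigma>`(Ls!i)) (dmap \<sigma> (Fs!i))"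
      using IH smono_sub[OF node(6)] sub nth_mem by blast
    then show ?thesis unfolding list_all2_conv_all_nth using len by auto
  qed
  have pw: "pw_disj (map ((`) \<sigma>) Ls)" using pw_disj_image[OF inj sub node(4)] .
  have "\<Union>(set (map ((`) \<sigma>) Ls)) = \<sigma> ` \<Union>(set Ls)" by auto
  also have "\<dots> = \<sigma> ` (L - {Min L, Max L})" using node(5) by simp
  also have "\<dots> = \<sigma> ` L - \<sigma> ` {Min L, Max L}"
    using inj node(1) ne by (intro inj_on_image_set_diff) (auto intro: Min_in Max_in)
  also have "\<dots> = \<sigma> ` L - {Min (\<sigma> ` L), Max (\<sigma> ` L)}"
    using smono_Min[OF node(1) ne node(6)] smono_Max[OF node(1) ne node(6)] by simp
  finally have un: "\<Union>(set (map ((`) \<sigma>) Ls)) = \<sigma> ` L - {Min (\<sigma> ` L), Max (\<sigma> ` L)}" .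
  have "diamond_on (\<sigma> ` L) (DNode (Min (\<sigma> ` L)) (map (dmap \<sigma>) Fs) (Max (\<sigma> ` L)))"
  proof (rule diamond_on.node[OF _ _ l2 pw un])
    show "finite (\<sigma> ` L)" using node(1) by simp
    show "2 \<le> card (\<sigma> ` L)" using node(2) inj by (simp add: card_image)
  qed
  then show ?case
    using smono_Min[OF node(1) ne node(6)] smono_Max[OF node(1) ne node(6)] by simp
qed


lemma Min_less_Max: assumes "finite L" "2 \<le> card L" shows "Min L < Max L"
proof (rule ccontr)
  assume "\<not> Min L < Max L"
  moreover have "Min L \<le> Max L" using assms by (intro Min_le Max_in) auto
  ultimately have e: "Min L = Max L" by simp
  have "\<forall>x\<in>L. x = Min L"
  proof
    fix x assume "x \<in> L"
    then have "Min L \<le> x" "x \<le> Max L" using assms by auto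
    then show "x = Min L" using e by simp
  qed
  then have "L \<subseteq> {Min L}" by auto
  then have "card L \<le> card {Min L}" by (intro card_mono) auto
  then have "card L \<le> 1" by simp
  then show False using assms by simp
qed

lemma leaf_bt: "bt_on {l} (BNode {l} [])"
  using bt_on.node[of "{l}" "[]" "[]" "{l}"] by (simp add: pw_disj_def)

lemma d2t_ok: "diamond_on L d \<Longrightarrow> bt_on L (d2t d) \<and> btweight ph (d2t d) = dweight ph d \<and> t2d (d2t d) = d"
proof (induction "card L" arbitrary: L d rule: less_induct)
  case less
  from less.prems show ?case
  proof (cases rule: diamond_on.cases)
    case (leaf l)
    then show ?thesis using leaf_bt by simp
  next
    case (node Ls Fs)
    define a where "a = Min L"
    define b where "b = Max L"
    define \<sigma> where "\<sigma> = nsucc L"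
    define a' where "a' = \<sigma> a"
    have fin: "finite L" and c2: "2 \<le> card L" using node by auto
    have ne: "L \<noteq> {}" using c2 by auto
    have aL: "a \<in> L" and bL: "b \<in> L" using fin ne unfolding a_def b_def by auto
    have ab: "a < b" using Min_less_Max[OF fin c2] unfolding a_def b_def .
    have amin: "\<And>y. y \<in> L \<Longrightarrow> a \<le> y" using fin unfolding a_def by simp
    have bmax: "\<And>y. y \<in> L \<Longrightarrow> y \<le> b" using fin unfolding b_def by simp
    note sa = nsucc[OF fin aL ab[unfolded b_def]]
    have a'L: "a' \<in> L" and aa': "a < a'" and a'le: "\<And>y. y \<in> L \<Longrightarrow> a < y \<Longrightarrow> a' \<le> y"
      using sa unfolding a'_def \<sigma>_def by auto
    have sm: "strict_mono_on (L - {b}) \<sigma>" using nsucc_mono[OF fin] unfolding \<sigma>_def b_def .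
    have inj: "inj_on \<sigma> (L - {b})" using sm by (rule strict_mono_on_imp_inj_on)
    have dl: "dlabels d = L" using diamond_on_labels[OF less.prems] .
    have len: "length Ls = length Fs" using node(4) by (simp add: list_all2_conv_all_nth)
    have Di: "\<And>i. i < length Ls \<Longrightarrow> diamond_on (Ls!i) (Fs!i)"
      using node(4) by (simp add: list_all2_conv_all_nth)
    have subi: "\<And>i. i < length Ls \<Longrightarrow> Ls!i \<subseteq> L - {a, b}"
      using node(6) nth_mem unfolding a_def b_def by blast
    have subs: "\<forall>X\<in>set Ls. X \<subseteq> L - {b}" using node(6) unfolding b_def by auto
    have Di': "\<And>i. i < length Ls \<Longrightarrow> diamond_on (\<sigma> ` (Ls!i)) (dmap \<sigma> (Fs!i))"
    proof -
      fix i assume i: "i < length Ls"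
      have "Ls!i \<subseteq> L - {b}" using subi[OF i] by auto
      then show "diamond_on (\<sigma> ` (Ls!i)) (dmap \<sigma> (Fs!i))" by (rule diamond_on_dmap[OF Di[OF i] smono_sub[OF sm]])
    qed
    have cardi: "\<And>i. i < length Ls \<Longrightarrow> card (\<sigma> ` (Ls!i)) < card L"
    proof -
      fix i assume i: "i < length Ls"
      have "Ls!i \<subseteq> L - {b}" using subi[OF i] by auto
      then have "inj_on \<sigma> (Ls!i)" by (rule inj_on_subset[OF inj])
      then have "card (\<sigma> ` (Ls!i)) = card (Ls!i)" by (rule card_image)
      also have "\<dots> < card L" using subi[OF i] aL fin by (intro psubset_card_mono) auto
      finally show "card (\<sigma> ` (Ls!i)) < card L" .
    qed
    have IH: "\<And>i. i < length Ls \<Longrightarrow> bt_on (\<sigma> ` (Ls!i)) (d2t (dmap \<sigma> (Fs!i))) \<and>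
       btweight ph (d2t (dmap \<sigma> (Fs!i))) = dweight ph (dmap \<sigma> (Fs!i)) \<and>
       t2d (d2t (dmap \<sigma> (Fs!i))) = dmap \<sigma> (Fs!i)"
      using less.hyps[OF cardi Di'] by blast
    define Ts where "Ts = map (\<lambda>F. d2t (dmap \<sigma> F)) Fs"
    have dd: "d2t d = BNode {a, a'} Ts"
      using node(1) dl unfolding Ts_def a_def b_def a'_def \<sigma>_def by simp
    have "\<Union>(set (map ((`) \<sigma>) Ls)) = \<sigma> ` \<Union>(set Ls)" by auto
    also have "\<dots> = \<sigma> ` (L - {a, b})" using node(6) unfolding a_def b_def by simp
    also have "\<dots> = \<sigma> ` ((L - {b}) - {a})" by (rule arg_cong[where f="image \<sigma>"]) blast
    also have "\<dots> = \<sigma> ` (L - {b}) - \<sigma> ` {a}"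
      by (rule inj_on_image_set_diff[OF inj]) (use aL ab in auto)
    also have "\<dots> = L - {a, a'}" using nsucc_image[OF fin] unfolding \<sigma>_def a_def b_def a'_def
      by auto
    finally have U: "\<Union>(set (map ((`) \<sigma>) Ls)) = L - {a, a'}" .
    have bt: "bt_on L (BNode {a, a'} Ts)"
    proof (rule bt_on.node[of "{a,a'}" Ts "map ((`) \<sigma>) Ls"])
      show "card {a, a'} = 1 \<or> card {a, a'} = 2" using aa' by simp
      show "card {a, a'} = 1 \<longrightarrow> Ts = []" using aa' by simp
      show "list_all2 bt_on (map ((`) \<sigma>) Ls) Ts"
        unfolding list_all2_conv_all_nth Ts_def using len IH by auto
      show "pw_disj (map ((`) \<sigma>) Ls)" using pw_disj_image[OF inj subs node(5)] .
      show "{a, a'} \<inter> \<Union> (set (map ((`) \<sigma>) Ls)) = {}" unfolding U by blast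
      show "\<forall>x\<in>{a, a'}. \<forall>y\<in>\<Union> (set (map ((`) \<sigma>) Ls)). x < y"
      proof (intro ballI)
        fix x y assume x: "x \<in> {a, a'}" and y: "y \<in> \<Union> (set (map ((`) \<sigma>) Ls))"
        have y2: "y \<in> L" "y \<noteq> a" "y \<noteq> a'" using y unfolding U by blast+
        have ay: "a < y" using amin[OF y2(1)] y2(2) by simp
        moreover have "a' < y" using a'le[OF y2(1) ay] y2(3) by simp
        ultimately show "x < y" using x by auto
      qed
      show "L = {a, a'} \<union> \<Union> (set (map ((`) \<sigma>) Ls))" unfolding U using aL a'L by blast
    qed
    have w: "map (btweight ph) Ts = map (dweight ph) Fs"
      unfolding Ts_def by (rule nth_equalityI) (use len IH in auto)
    have inv: "map (\<lambda>T. dmap (npred L) (t2d T)) Ts = Fs"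
    proof (rule nth_equalityI)
      show "length (map (\<lambda>T. dmap (npred L) (t2d T)) Ts) = length Fs" unfolding Ts_def by simp
      fix i assume "i < length (map (\<lambda>T. dmap (npred L) (t2d T)) Ts)"
      then have i: "i < length Ls" using len unfolding Ts_def by simp
      have "map (\<lambda>T. dmap (npred L) (t2d T)) Ts ! i = dmap (npred L) (dmap \<sigma> (Fs!i))"
        using IH[OF i] i len unfolding Ts_def by simp
      also have "\<dots> = Fs ! i" unfolding dmap_dmap
      proof (rule dmap_id, intro ballI)
        fix x assume "x \<in> dlabels (Fs!i)"
        then have xL: "x \<in> L" "x \<noteq> b" using diamond_on_labels[OF Di[OF i]] subi[OF i] by auto
        then have "x < Max L" using bmax[OF xL(1)] unfolding b_def by simp
        note xL(1) this
        then show "(npred L \<circ> \<sigma>) x = x" using npred_nsucc[OF fin] unfolding \<sigma>_def by simp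
      qed
      finally show "map (\<lambda>T. dmap (npred L) (t2d T)) Ts ! i = Fs ! i" .
    qed
    have "t2d (BNode {a, a'} Ts) = DNode a (map (\<lambda>T. dmap (npred L) (t2d T)) Ts) b"
      using bt_on_labels[OF bt] aa' unfolding b_def by simp
    then have "t2d (d2t d) = d" using inv dd node(1) unfolding a_def b_def by simp
    moreover have "btweight ph (d2t d) = dweight ph d"
    proof -
      have "btweight ph (d2t d) = ph (length Ts) * prod_list (map (btweight ph) Ts)"
        unfolding dd using aa' by simp
      also have "\<dots> = dweight ph d" unfolding w by (simp add: Ts_def node(1))
      finally show ?thesis .
    qed
    ultimately show ?thesis using bt dd by simp
  qed
qed


lemma t2d_ok: "bt_on L t \<Longrightarrow> diamond_on L (t2d t) \<and> dweight ph (t2d t) = btweight ph t \<and> d2t (t2d t) = t"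
proof (induct rule: bt_on.induct)
  case (node S Ts Ls L)
  have len: "length Ls = length Ts" using node(3) by (simp add: list_all2_conv_all_nth)
  have IHi: "\<And>i. i < length Ls \<Longrightarrow> bt_on (Ls!i) (Ts!i) \<and> diamond_on (Ls!i) (t2d (Ts!i)) \<and>
      dweight ph (t2d (Ts!i)) = btweight ph (Ts!i) \<and> d2t (t2d (Ts!i)) = Ts!i"
    using node(3) by (simp add: list_all2_conv_all_nth)
  have l2: "list_all2 bt_on Ls Ts" using node(3) by (rule list_all2_mono) simp
  have btt: "bt_on L (BNode S Ts)" by (rule bt_on.node[OF node(1,2) l2 node(4,5,6,7)])
  have fin: "finite L" using bt_on_fin[OF btt] .
  have tl: "tlabels (BNode S Ts) = L" using bt_on_labels[OF btt] .
  show ?case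
  proof (cases "card S = 1")
    case True
    then have Ts: "Ts = []" using node(2) by simp
    then have "Ls = []" using len by simp
    then have LS: "L = S" using node(7) by simp
    obtain l where Sl: "S = {l}" using True card_1_singletonE by blast
    show ?thesis using Ts LS Sl by (simp add: diamond_on.leaf)
  next
    case False
    then have c2: "card S = 2" using node(1) by simp
    obtain a a' where S: "S = {a, a'}" and aa': "a < a'"
    proof -
      obtain x y where "S = {x, y}" "x \<noteq> y" using c2 card_2_iff by metis
      then show ?thesis using that by (metis insert_commute linorder_neq_iff)
    qed
    define R where "R = \<Union>(set Ls)"
    have LR: "L = {a, a'} \<union> R" using node(7) S unfolding R_def by simp
    have Rg: "\<And>y. y \<in> R \<Longrightarrow> a' < y" using node(6) S unfolding R_def by blast
    have aR: "a \<notin> R" "a' \<notin> R" using Rg aa' by force+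
    have aL: "a \<in> L" and a'L: "a' \<in> L" using LR by auto
    have minL: "Min L = a"
    proof (rule Min_eqI[OF fin _ aL])
      fix y assume "y \<in> L" then show "a \<le> y" using LR Rg aa' by fastforce
    qed
    have suc: "nsucc L a = a'" unfolding nsucc_def
    proof (rule Min_eqI)
      show "finite {y \<in> L. a < y}" using fin by simp
      show "a' \<in> {y \<in> L. a < y}" using a'L aa' by simp
      fix y assume "y \<in> {y \<in> L. a < y}" then show "a' \<le> y" using LR Rg by fastforce
    qed
    define b where "b = Max L"
    have bL: "b \<in> L" using fin aL unfolding b_def by (auto intro: Max_in)
    have a'b: "a' \<le> b" using fin a'L unfolding b_def by simp
    have c2L: "2 \<le> card L"
    proof -
      have "card {a, a'} \<le> card L" using aL a'L fin by (intro card_mono) auto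
      then show ?thesis using aa' by simp
    qed
    define \<tau> where "\<tau> = npred L"
    have sm: "strict_mono_on (L - {a}) \<tau>" using npred_mono[OF fin] unfolding \<tau>_def minL .
    have inj: "inj_on \<tau> (L - {a})" using sm by (rule strict_mono_on_imp_inj_on)
    have subi: "\<And>i. i < length Ls \<Longrightarrow> Ls!i \<subseteq> L - {a}"
      using LR aR unfolding R_def using nth_mem by blast
    have subs: "\<forall>X\<in>set Ls. X \<subseteq> L - {a}" using LR aR unfolding R_def by blast
    define Fs where "Fs = map (\<lambda>T. dmap \<tau> (t2d T)) Ts"
    have tt: "t2d (BNode S Ts) = DNode a Fs b"
    proof -
      have "Min S = a" using S aa' by simp
      then show ?thesis using False unfolding t2d.simps tl Fs_def b_def \<tau>_def by simp
    qed
    have Di: "\<And>i. i < length Ls \<Longrightarrow> diamond_on (\<tau> ` (Ls!i)) (dmap \<tau> (t2d (Ts!i)))"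
    proof -
      fix i assume i: "i < length Ls"
      show "diamond_on (\<tau> ` (Ls!i)) (dmap \<tau> (t2d (Ts!i)))"
        using diamond_on_dmap[OF conjunct1[OF conjunct2[OF IHi[OF i]]] smono_sub[OF sm subi[OF i]]] .
    qed
    have "\<Union>(set (map ((`) \<tau>) Ls)) = \<tau> ` R" unfolding R_def by auto
    also have "\<dots> = \<tau> ` ((L - {a}) - {a'})"
      by (rule arg_cong[where f="image \<tau>"]) (use LR aR in blast)
    also have "\<dots> = \<tau> ` (L - {a}) - \<tau> ` {a'}"
      by (rule inj_on_image_set_diff[OF inj]) (use a'L aa' in auto)
    also have "\<tau> ` {a'} = {a}"
    proof -
      have "a < Max L" using aa' a'b unfolding b_def by simp
      then have "npred L (nsucc L a) = a" using npred_nsucc[OF fin aL] by simp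
      then show ?thesis unfolding \<tau>_def suc by simp
    qed
    also have "\<tau> ` (L - {a}) = L - {b}" using npred_image[OF fin] unfolding \<tau>_def minL b_def .
    finally have U: "\<Union>(set (map ((`) \<tau>) Ls)) = L - {Min L, Max L}"
      unfolding minL b_def by blast
    have dia: "diamond_on L (DNode (Min L) Fs (Max L))"
    proof (rule diamond_on.node[OF fin c2L _ _ U])
      show "list_all2 diamond_on (map ((`) \<tau>) Ls) Fs"
        unfolding list_all2_conv_all_nth Fs_def using len Di by simp
      show "pw_disj (map ((`) \<tau>) Ls)" using pw_disj_image[OF inj subs node(4)] .
    qed
    then have dia': "diamond_on L (DNode a Fs b)" unfolding minL b_def .
    have w: "map (dweight ph) Fs = map (btweight ph) Ts"
      unfolding Fs_def by (rule nth_equalityI) (use len IHi in auto)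
    have weq: "dweight ph (DNode a Fs b) = btweight ph (BNode S Ts)"
    proof -
      have "dweight ph (DNode a Fs b) = ph (length Fs) * prod_list (map (dweight ph) Fs)" by simp
      also have "\<dots> = ph (length Ts) * prod_list (map (btweight ph) Ts)" unfolding w by (simp add: Fs_def)
      also have "\<dots> = btweight ph (BNode S Ts)" using c2 by simp
      finally show ?thesis .
    qed
    have dlD: "dlabels (DNode a Fs b) = L" using diamond_on_labels[OF dia'] .
    have inv: "map (\<lambda>F. d2t (dmap (nsucc L) F)) Fs = Ts"
    proof (rule nth_equalityI)
      show "length (map (\<lambda>F. d2t (dmap (nsucc L) F)) Fs) = length Ts" unfolding Fs_def by simp
      fix i assume "i < length (map (\<lambda>F. d2t (dmap (nsucc L) F)) Fs)"
      then have i: "i < length Ls" using len unfolding Fs_def by simp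
      have "map (\<lambda>F. d2t (dmap (nsucc L) F)) Fs ! i = d2t (dmap (nsucc L) (dmap \<tau> (t2d (Ts!i))))"
        using i len unfolding Fs_def by simp
      also have "dmap (nsucc L) (dmap \<tau> (t2d (Ts!i))) = t2d (Ts!i)" unfolding dmap_dmap
      proof (rule dmap_id, intro ballI)
        fix x assume "x \<in> dlabels (t2d (Ts!i))"
        then have xL: "x \<in> L" "x \<noteq> a"
          using diamond_on_labels[OF conjunct1[OF conjunct2[OF IHi[OF i]]]] subi[OF i] by auto
        then have "Min L < x" using minL fin by (metis Min_le order_neq_le_trans)
        then show "(nsucc L \<circ> \<tau>) x = x" using nsucc_npred[OF fin xL(1)] unfolding \<tau>_def by simp
      qed
      also have "d2t (t2d (Ts!i)) = Ts!i" using IHi[OF i] by simp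
      finally show "map (\<lambda>F. d2t (dmap (nsucc L) F)) Fs ! i = Ts ! i" .
    qed
    have "d2t (DNode a Fs b) = BNode {a, nsucc L a} (map (\<lambda>F. d2t (dmap (nsucc L) F)) Fs)"
      unfolding d2t.simps(2) dlD ..
    also have "\<dots> = BNode S Ts" unfolding inv suc S ..
    finally have "d2t (DNode a Fs b) = BNode S Ts" .
    then show ?thesis using tt dia' weq by simp
  qed
qed


theorem mainTheorem2:
  fixes phi :: "nat \<Rightarrow> real" and n :: nat
  assumes "\<And>k. phi k \<ge> 0" and "phi 0 > 0" and "n \<ge> 1"
  shows "\<exists>f. bij_betw f {d. diamond_on {1..n} d} {t. bt_on {1..n} t}
            \<and> (\<forall>d. diamond_on {1..n} d \<longrightarrow> btweight phi (f d) = dweight phi d)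
            \<and> (\<Sum>d\<in>{d. diamond_on {1..n} d}. dweight phi d)
                = (\<Sum>t\<in>{t. bt_on {1..n} t}. btweight phi t)"
proof (intro exI conjI)
  have bij: "bij_betw d2t {d. diamond_on {1..n} d} {t. bt_on {1..n} t}"
    by (rule bij_betw_byWitness[where f'=t2d])
       (use d2t_ok[where ph=phi] t2d_ok[where ph=phi] in auto)
  show "bij_betw d2t {d. diamond_on {1..n} d} {t. bt_on {1..n} t}" by (rule bij)
  show w: "\<forall>d. diamond_on {1..n} d \<longrightarrow> btweight phi (d2t d) = dweight phi d"
    using d2t_ok by blast
  have "(\<Sum>t\<in>{t. bt_on {1..n} t}. btweight phi t) = (\<Sum>d\<in>{d. diamond_on {1..n} d}. btweight phi (d2t d))"
    by (rule sum.reindex_bij_betw[OF bij, symmetric])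
  also have "\<dots> = (\<Sum>d\<in>{d. diamond_on {1..n} d}. dweight phi d)"
    by (rule sum.cong) (use w in auto)
  finally show "(\<Sum>d\<in>{d. diamond_on {1..n} d}. dweight phi d) = (\<Sum>t\<in>{t. bt_on {1..n} t}. btweight phi t)" ..
qed

end
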